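(* Let $G$ and $H$ be graphs with $\chi_v(G)=\chi_v(H)=t$, and assume every optimal vector coloring of $G$ is injective. Then: (i) every homomorphism $G\to H$ is injective; (ii) if additionally every optimal vector coloring $g\mapsto p_g$ of $G$ satisfies, for all $g,g'\in V(G)$, $\langle p_g,p_{g'}\rangle\le-\frac{1}{t-1}$ if and only if $g\sim_G g'$, then every homomorphism $G\to H$ is an isomorphism from $G$ onto an induced subgraph of $H$.
   Context: A vector $t$-coloring of a graph ($t\ge2$) assigns unit vectors in some $\mathbb{R}^d$ to the vertices so that $\langle p_i,p_j\rangle\le-1/(t-1)$ whenever $i\sim j$. $\chi_v$ is the least $t\ge2$ admitting a vector $t$-coloring; an optimal vector coloring is a vector $\chi_v$-coloring. A vector coloring is injective if distinct vertices receive distinct vectors. A homomorphism is an adjacency-preserving map between vertex sets. *)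

theory Defs
  imports Main Complex_Main
begin

definition graph :: "'a set \<Rightarrow> ('a \<Rightarrow> 'a \<Rightarrow> bool) \<Rightarrow> bool" where
  "graph V E \<longleftrightarrow> finite V \<and> (\<forall>u v. E u v \<longrightarrow> u \<in> V \<and> v \<in> V)
     \<and> (\<forall>u v. E u v \<longrightarrow> E v u) \<and> (\<forall>v. \<not> E v v)"

text \<open>Vectors of R^d are represented as functions nat => real that vanish at
indices >= d; the inner product is the sum over i < d.\<close>
definition inner_d :: "nat \<Rightarrow> (nat \<Rightarrow> real) \<Rightarrow> (nat \<Rightarrow> real) \<Rightarrow> real" where
  "inner_d d x y = (\<Sum>i<d. x i * y i)"

definition vector_coloring ::
  "'a set \<Rightarrow> ('a \<Rightarrow> 'a \<Rightarrow> bool) \<Rightarrow> real \<Rightarrow> nat \<Rightarrow> ('a \<Rightarrow> nat \<Rightarrow> real) \<Rightarrow> bool" where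
  "vector_coloring V E t d p \<longleftrightarrow> t \<ge> 2
     \<and> (\<forall>v\<in>V. \<forall>i\<ge>d. p v i = 0)
     \<and> (\<forall>v\<in>V. inner_d d (p v) (p v) = 1)
     \<and> (\<forall>u\<in>V. \<forall>v\<in>V. E u v \<longrightarrow> inner_d d (p u) (p v) \<le> - 1 / (t - 1))"

definition chi_v :: "'a set \<Rightarrow> ('a \<Rightarrow> 'a \<Rightarrow> bool) \<Rightarrow> real" where
  "chi_v V E = Inf {t. \<exists>d p. vector_coloring V E t d p}"

definition optimal_vector_coloring ::
  "'a set \<Rightarrow> ('a \<Rightarrow> 'a \<Rightarrow> bool) \<Rightarrow> nat \<Rightarrow> ('a \<Rightarrow> nat \<Rightarrow> real) \<Rightarrow> bool" where
  "optimal_vector_coloring V E d p \<longleftrightarrow> vector_coloring V E (chi_v V E) d p"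

definition graph_hom ::
  "'a set \<Rightarrow> ('a \<Rightarrow> 'a \<Rightarrow> bool) \<Rightarrow> 'b set \<Rightarrow> ('b \<Rightarrow> 'b \<Rightarrow> bool) \<Rightarrow> ('a \<Rightarrow> 'b) \<Rightarrow> bool" where
  "graph_hom VG EG VH EH f \<longleftrightarrow> (\<forall>v\<in>VG. f v \<in> VH)
     \<and> (\<forall>u\<in>VG. \<forall>v\<in>VG. EG u v \<longrightarrow> EH (f u) (f v))"

definition induced_embedding ::
  "'a set \<Rightarrow> ('a \<Rightarrow> 'a \<Rightarrow> bool) \<Rightarrow> 'b set \<Rightarrow> ('b \<Rightarrow> 'b \<Rightarrow> bool) \<Rightarrow> ('a \<Rightarrow> 'b) \<Rightarrow> bool" where
  "induced_embedding VG EG VH EH f \<longleftrightarrow> (\<forall>v\<in>VG. f v \<in> VH) \<and> inj_on f VG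
     \<and> (\<forall>u\<in>VG. \<forall>v\<in>VG. EG u v \<longleftrightarrow> EH (f u) (f v))"

end

theory Submission
  imports Defs "HOL-Analysis.Analysis"
begin


lemma inner_d_commute: "inner_d d x y = inner_d d y x"
  unfolding inner_d_def by (simp add: mult.commute)

lemma inner_d_nonneg: "inner_d d x x \<ge> 0"
  unfolding inner_d_def by (simp add: sum_nonneg)

lemma inner_d_zero: "inner_d d x x = 0 \<Longrightarrow> i < d \<Longrightarrow> x i = 0"
  unfolding inner_d_def using sum_nonneg_eq_0_iff[of "{..<d}" "\<lambda>i. x i * x i"] by simp

lemma inner_d_expand:
  assumes "\<forall>i<d. y i = (\<Sum>j<k. a j * e j i)"
  shows "inner_d d z y = (\<Sum>j<k. a j * inner_d d z (e j))"
proof -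
  have "inner_d d z y = (\<Sum>i<d. z i * (\<Sum>j<k. a j * e j i))"
    unfolding inner_d_def using assms by (intro sum.cong) auto
  also have "\<dots> = (\<Sum>i<d. \<Sum>j<k. a j * (z i * e j i))"
    by (simp add: sum_distrib_left algebra_simps)
  also have "\<dots> = (\<Sum>j<k. \<Sum>i<d. a j * (z i * e j i))" by (rule sum.swap)
  also have "\<dots> = (\<Sum>j<k. a j * inner_d d z (e j))"
    unfolding inner_d_def by (simp add: sum_distrib_left)
  finally show ?thesis .
qed

lemma inner_d_diff:
  "inner_d d (\<lambda>i. x i - (\<Sum>l<k. c l * e l i)) y = inner_d d x y - (\<Sum>l<k. c l * inner_d d (e l) y)"
proof -
  have "inner_d d (\<lambda>i. x i - (\<Sum>l<k. c l * e l i)) y = inner_d d y (\<lambda>i. x i - (\<Sum>l<k. c l * e l i))"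
    by (rule inner_d_commute)
  also have "\<dots> = inner_d d y x - inner_d d y (\<lambda>i. (\<Sum>l<k. c l * e l i))"
    unfolding inner_d_def by (simp add: right_diff_distrib sum_subtractf)
  also have "inner_d d y (\<lambda>i. (\<Sum>l<k. c l * e l i)) = (\<Sum>l<k. c l * inner_d d y (e l))"
    by (rule inner_d_expand) simp
  finally show ?thesis by (simp add: inner_d_commute)
qed

lemma inner_d_div: "inner_d d (\<lambda>i. r i / s) y = inner_d d r y / s"
  unfolding inner_d_def by (simp add: sum_divide_distrib)

lemma inner_d_pad:
  assumes "k \<le> N" "\<forall>i\<ge>k. x i = 0"
  shows "inner_d N x y = inner_d k x y"
  unfolding inner_d_def
  using sum.mono_neutral_right[of "{..<N}" "{..<k}" "\<lambda>i. x i * y i"] assms by auto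

lemma gs:
  "\<exists>k e. k \<le> length xs \<and> (\<forall>j<k. \<forall>j'<k. inner_d d (e j) (e j') = (if j = j' then 1 else 0))
     \<and> (\<forall>x\<in>set xs. \<forall>i<d. x i = (\<Sum>j<k. inner_d d x (e j) * e j i))"
proof (induction xs)
  case Nil
  show ?case by (rule exI[of _ 0]) simp
next
  case (Cons x xs)
  then obtain k e where k: "k \<le> length xs"
    and on: "\<forall>j<k. \<forall>j'<k. inner_d d (e j) (e j') = (if j = j' then 1 else 0)"
    and ex: "\<forall>x\<in>set xs. \<forall>i<d. x i = (\<Sum>j<k. inner_d d x (e j) * e j i)" by blast
  define c where "c j = inner_d d x (e j)" for j
  define r where "r i = x i - (\<Sum>j<k. c j * e j i)" for i
  have rperp: "inner_d d r (e j) = 0" if "j < k" for j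
  proof -
    have "inner_d d r (e j) = c j - (\<Sum>l<k. c l * inner_d d (e l) (e j))"
      unfolding r_def using inner_d_diff[where d=d and x=x and k=k and c=c and e=e and y="e j"] by (simp add: c_def)
    also have "(\<Sum>l<k. c l * inner_d d (e l) (e j)) = (\<Sum>l<k. if l = j then c l else 0)"
      using on that by (intro sum.cong) auto
    also have "\<dots> = c j" using that by simp
    finally show ?thesis by simp
  qed
  have rx: "inner_d d r x = inner_d d r r"
  proof -
    have "\<forall>i<d. x i = r i + (\<Sum>j<k. c j * e j i)" by (simp add: r_def)
    have "inner_d d r x = inner_d d r r + inner_d d r (\<lambda>i. \<Sum>j<k. c j * e j i)"
    proof -
      have "inner_d d r x = (\<Sum>i<d. r i * (r i + (\<Sum>j<k. c j * e j i)))"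
        unfolding inner_d_def by (intro sum.cong) (auto simp: r_def)
      then show ?thesis unfolding inner_d_def by (simp add: distrib_left sum.distrib)
    qed
    also have "inner_d d r (\<lambda>i. \<Sum>j<k. c j * e j i) = (\<Sum>j<k. c j * inner_d d r (e j))"
      by (rule inner_d_expand) simp
    also have "\<dots> = 0" using rperp by simp
    finally show ?thesis by simp
  qed
  have rold: "inner_d d r y = 0" if "y \<in> set xs" for y
  proof -
    have "inner_d d r y = (\<Sum>j<k. inner_d d y (e j) * inner_d d r (e j))"
      by (rule inner_d_expand) (use ex that in auto)
    also have "\<dots> = 0" using rperp by simp
    finally show ?thesis .
  qed
  show ?case
  proof (cases "inner_d d r r = 0")
    case True
    have "\<forall>i<d. x i = (\<Sum>j<k. inner_d d x (e j) * e j i)"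
    proof (intro allI impI)
      fix i assume "i < d"
      then have "r i = 0" using inner_d_zero[OF True] by blast
      then show "x i = (\<Sum>j<k. inner_d d x (e j) * e j i)" by (simp add: r_def c_def)
    qed
    then show ?thesis using k on ex by (intro exI[of _ k] exI[of _ e]) auto
  next
    case False
    define s where "s = sqrt (inner_d d r r)"
    have spos: "s > 0" using False inner_d_nonneg[of d r] by (simp add: s_def)
    have ss: "s * s = inner_d d r r" using inner_d_nonneg[of d r] by (simp add: s_def)
    define e' where "e' = e(k := (\<lambda>i. r i / s))"
    have e'o: "e' j = e j" if "j < k" for j using that by (simp add: e'_def)
    have e'k: "e' k = (\<lambda>i. r i / s)" by (simp add: e'_def)
    have on': "\<forall>j<Suc k. \<forall>j'<Suc k. inner_d d (e' j) (e' j') = (if j = j' then 1 else 0)"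
    proof (intro allI impI)
      fix j j' assume j: "j < Suc k" and j': "j' < Suc k"
      have kk: "inner_d d (e' k) (e' k) = 1"
        unfolding e'k using spos ss False
        by (simp add: inner_d_div inner_d_commute[of d r "\<lambda>i. r i / s"])
      have kj: "inner_d d (e' k) (e' l) = 0" if "l < k" for l
        unfolding e'k e'o[OF that] by (simp add: inner_d_div rperp that)
      show "inner_d d (e' j) (e' j') = (if j = j' then 1 else 0)"
      proof (cases "j = k"; cases "j' = k")
        assume "j = k" "j' = k" then show ?thesis using kk by simp
      next
        assume "j = k" "j' \<noteq> k" then show ?thesis using kj[of j'] j' by simp
      next
        assume "j \<noteq> k" "j' = k" then show ?thesis using kj[of j] j inner_d_commute by simp
      next
        assume "j \<noteq> k" "j' \<noteq> k" then show ?thesis using on j j' e'o by simp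
      qed
    qed
    have sumk: "(\<Sum>j<k. inner_d d y (e' j) * e' j i) = (\<Sum>j<k. inner_d d y (e j) * e j i)" for y i
      using e'o by (intro sum.cong) auto
    have ex': "\<forall>y\<in>set (x # xs). \<forall>i<d. y i = (\<Sum>j<Suc k. inner_d d y (e' j) * e' j i)"
    proof (intro ballI allI impI)
      fix y i assume y: "y \<in> set (x # xs)" and i: "i < d"
      show "y i = (\<Sum>j<Suc k. inner_d d y (e' j) * e' j i)"
      proof (cases "y = x")
        case True
        have "inner_d d x (e' k) = s"
          unfolding e'k using spos ss rx
          by (simp add: inner_d_commute[of d x] inner_d_div) (metis ss nonzero_mult_div_cancel_left spos less_irrefl)
        then show ?thesis using True spos
          by (simp add: sumk r_def c_def e'k)
      next
        case False
        then have y': "y \<in> set xs" using y by simp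
        have "inner_d d y (e' k) = 0"
          unfolding e'k using rold[OF y']
          by (simp add: inner_d_commute[of d y] inner_d_div)
        then show ?thesis using ex y' i by (simp add: sumk)
      qed
    qed
    show ?thesis using k on' ex' by (intro exI[of _ "Suc k"] exI[of _ e']) auto
  qed
qed



lemma reduce_dim:
  assumes "finite V" "vector_coloring V E t d p"
  shows "\<exists>q. vector_coloring V E t (card V) q"
proof -
  obtain xs where xs: "set xs = V" "distinct xs" using finite_distinct_list[OF assms(1)] by blast
  have len: "length xs = card V" using xs distinct_card by fastforce
  obtain k e where k: "k \<le> length (map p xs)"
    and ex: "\<forall>x\<in>set (map p xs). \<forall>i<d. x i = (\<Sum>j<k. inner_d d x (e j) * e j i)"
    using gs[of "map p xs" d] by auto
  have ex': "\<forall>v\<in>V. \<forall>i<d. p v i = (\<Sum>j<k. inner_d d (p v) (e j) * e j i)"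
    using ex xs by auto
  have k: "k \<le> card V" using k len by simp
  define q where "q v j = (if j < k then inner_d d (p v) (e j) else 0)" for v j
  have iq: "inner_d (card V) (q u) (q v) = inner_d d (p u) (p v)" if "u \<in> V" "v \<in> V" for u v
  proof -
    have "inner_d (card V) (q u) (q v) = inner_d k (q u) (q v)"
      by (rule inner_d_pad) (use k in \<open>auto simp: q_def\<close>)
    also have "\<dots> = (\<Sum>j<k. inner_d d (p v) (e j) * inner_d d (p u) (e j))"
      unfolding inner_d_def q_def by (intro sum.cong) auto
    also have "\<dots> = inner_d d (p u) (p v)"
      by (rule inner_d_expand[symmetric]) (use ex' that in auto)
    finally show ?thesis .
  qed
  have "vector_coloring V E t (card V) q"
    using assms(2) iq k unfolding vector_coloring_def by (auto simp: q_def)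
  then show ?thesis by blast
qed



lemma simplex_sum:
  fixes n :: nat and a b :: nat and c :: real
  assumes "a < n" "b < n"
  shows "(\<Sum>i<n. ((if i = a then 1 else 0) - c) * ((if i = b then 1 else 0) - c))
         = (if a = b then 1 else 0) - 2 * c + real n * c * c"
proof -
  have "(\<Sum>i<n. ((if i = a then 1 else 0) - c) * ((if i = b then 1 else 0) - c))
      = (\<Sum>i<n. (if i = a \<and> i = b then 1 else 0) - (if i = a then c else 0) - (if i = b then c else 0) + c * c)"
    by (intro sum.cong) (auto simp: algebra_simps)
  also have "\<dots> = (if a = b then 1 else 0) - c - c + real n * (c * c)"
    using assms by (simp add: sum.distrib sum_subtractf) (auto intro!: sum.neutral)
  finally show ?thesis by simp
qed

lemma exists_coloring:
  assumes "graph V E"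
  shows "\<exists>t d p. vector_coloring V E t d p"
proof (cases "card V < 2")
  case True
  have noE: "\<not> E u v" for u v
  proof
    assume e: "E u v"
    then have "u \<in> V" "v \<in> V" "u \<noteq> v" using assms unfolding graph_def by metis+
    then have "card {u, v} \<le> card V" using assms unfolding graph_def by (intro card_mono) auto
    with \<open>u \<noteq> v\<close> True show False by simp
  qed
  have "vector_coloring V E 2 1 (\<lambda>v i. if i = 0 then 1 else 0)"
    unfolding vector_coloring_def inner_d_def using noE by auto
  then show ?thesis by blast
next
  case False
  define n where "n = card V"
  have n2: "n \<ge> 2" using False n_def by simp
  obtain idx where idx: "bij_betw idx V {..<n}"
    using assms unfolding graph_def n_def
    by (metis bij_betw_inv ex_bij_betw_nat_finite lessThan_atLeast0)
  define c :: real where "c = 1 / real n"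
  define s :: real where "s = (real n - 1) / real n"
  define p where "p v i = (if i < n then ((if i = idx v then 1 else 0) - c) / sqrt s else 0)" for v i
  have spos: "s > 0" using n2 by (simp add: s_def)
  have ip: "inner_d n (p u) (p v) = (if u = v then 1 else - 1 / (real n - 1))" if "u \<in> V" "v \<in> V" for u v
  proof -
    have iu: "idx u < n" "idx v < n" using idx that by (auto simp: bij_betw_def)
    have inj: "idx u = idx v \<longleftrightarrow> u = v" using idx that by (auto simp: bij_betw_def inj_on_def)
    have "inner_d n (p u) (p v) = (\<Sum>i<n. ((if i = idx u then 1 else 0) - c) * ((if i = idx v then 1 else 0) - c)) / s"
      unfolding inner_d_def p_def using spos
      by (simp add: sum_divide_distrib real_sqrt_mult[symmetric])
    also have "\<dots> = ((if u = v then 1 else 0) - 2 * c + real n * c * c) / s"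
      using simplex_sum[OF iu] inj by simp
    also have "\<dots> = (if u = v then 1 else - 1 / (real n - 1))"
      using n2 by (auto simp: c_def s_def field_simps)
    finally show ?thesis .
  qed
  have "vector_coloring V E (real n) n p"
    unfolding vector_coloring_def
  proof (intro conjI ballI allI impI)
    show "2 \<le> real n" using n2 by simp
  next
    fix v i assume "v \<in> V" "n \<le> i" then show "p v i = 0" by (simp add: p_def)
  next
    fix v assume "v \<in> V" then show "inner_d n (p v) (p v) = 1" using ip by simp
  next
    fix u v assume "u \<in> V" "v \<in> V" "E u v"
    then have "u \<noteq> v" using assms unfolding graph_def by metis
    then show "inner_d n (p u) (p v) \<le> - 1 / (real n - 1)" using ip \<open>u \<in> V\<close> \<open>v \<in> V\<close> by simp
  qed
  then show ?thesis by blast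
qed



lemma subseq_finite:
  fixes f :: "nat \<Rightarrow> 'i \<Rightarrow> real"
  assumes "finite S" "\<forall>i\<in>S. bounded (range (\<lambda>n. f n i))"
  shows "\<exists>r. strict_mono r \<and> (\<forall>i\<in>S. convergent (\<lambda>n. f (r n) i))"
  using assms
proof (induction S rule: finite_induct)
  case empty
  show ?case by (rule exI[of _ id]) (simp add: strict_mono_def)
next
  case (insert i S)
  then obtain r where r: "strict_mono r" "\<forall>j\<in>S. convergent (\<lambda>n. f (r n) j)" by auto
  have "bounded (range (\<lambda>n. f (r n) i))"
    by (rule bounded_subset[of "range (\<lambda>n. f n i)"]) (use insert.prems in auto)
  then obtain l r2 where r2: "strict_mono r2" "((\<lambda>n. f (r n) i) \<circ> r2) \<longlonglongrightarrow> l"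
    using bounded_imp_convergent_subsequence by blast
  have "strict_mono (r \<circ> r2)" using r r2 by (simp add: strict_mono_o)
  moreover have "convergent (\<lambda>n. f ((r \<circ> r2) n) j)" if "j \<in> insert i S" for j
  proof (cases "j = i")
    case True
    then show ?thesis using r2 by (auto simp: convergent_def o_def)
  next
    case False
    then have "convergent (\<lambda>n. f (r n) j)" using r that by auto
    then have "convergent ((\<lambda>n. f (r n) j) \<circ> r2)" using r2 convergent_subseq_convergent by blast
    then show ?thesis by (simp add: o_def)
  qed
  ultimately show ?case by blast
qed

lemma attain:
  assumes G: "graph V E"
  shows "\<exists>d p. vector_coloring V E (chi_v V E) d p"
proof -
  define T where "T = {t. \<exists>d p. vector_coloring V E t d p}"
  define chi where "chi = chi_v V E"
  have chiT: "chi = Inf T" unfolding chi_def T_def chi_v_def by simp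
  define N where "N = card V"
  have fin: "finite V" using G unfolding graph_def by simp
  have Tne: "T \<noteq> {}" using exists_coloring[OF G] unfolding T_def by blast
  have T2: "t \<ge> 2" if "t \<in> T" for t using that unfolding T_def vector_coloring_def by auto
  have bdd: "bdd_below T" using T2 by (auto simp: bdd_below_def)
  have chi2: "chi \<ge> 2" unfolding chiT by (rule cInf_greatest[OF Tne]) (use T2 in auto)
  have "\<forall>n. \<exists>t q. chi \<le> t \<and> t < chi + 1 / real (Suc n) \<and> vector_coloring V E t N q"
  proof
    fix n
    have "Inf T < chi + 1 / real (Suc n)" unfolding chiT by simp
    then obtain t where t: "t \<in> T" "t < chi + 1 / real (Suc n)" using cInf_lessD[OF Tne] by blast
    then obtain d p where "vector_coloring V E t d p" unfolding T_def by blast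
    then obtain q where "vector_coloring V E t N q" using reduce_dim[OF fin] N_def by blast
    moreover have "chi \<le> t" unfolding chiT using cInf_lower[OF t(1) bdd] .
    ultimately show "\<exists>t q. chi \<le> t \<and> t < chi + 1 / real (Suc n) \<and> vector_coloring V E t N q"
      using t by blast
  qed
  then obtain tn q where tq: "\<And>n. chi \<le> tn n" "\<And>n. tn n < chi + 1 / real (Suc n)"
    "\<And>n. vector_coloring V E (tn n) N (q n)" by metis
  have tlim: "tn \<longlonglongrightarrow> chi"
  proof (rule tendsto_sandwich[of "\<lambda>n. chi" _ _ "\<lambda>n. chi + 1 / real (Suc n)"])
    show "\<forall>\<^sub>F n in sequentially. chi \<le> tn n" using tq by simp
    show "\<forall>\<^sub>F n in sequentially. tn n \<le> chi + 1 / real (Suc n)" using tq(2) less_imp_le by (intro always_eventually) auto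
    show "(\<lambda>n. chi) \<longlonglongrightarrow> chi" by simp
    have "(\<lambda>n. 1 / real (Suc n)) \<longlonglongrightarrow> 0" using LIMSEQ_inverse_real_of_nat by (simp add: inverse_eq_divide)
    then show "(\<lambda>n. chi + 1 / real (Suc n)) \<longlonglongrightarrow> chi" using tendsto_add[of "\<lambda>n. chi" chi] by fastforce
  qed
  have bnd: "\<bar>q n v i\<bar> \<le> 1" if "v \<in> V" for n v i
  proof (cases "i < N")
    case True
    have "q n v i * q n v i \<le> (\<Sum>j<N. q n v j * q n v j)"
      by (rule member_le_sum) (use True in auto)
    also have "\<dots> = 1" using tq(3)[of n] that unfolding vector_coloring_def inner_d_def by auto
    finally have "\<bar>q n v i\<bar>^2 \<le> 1^2" by (simp add: power2_eq_square)
    then show ?thesis using abs_le_square_iff[of "q n v i" 1] by simp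
  next
    case False
    then show ?thesis using tq(3)[of n] that unfolding vector_coloring_def by auto
  qed
  define f where "f n x = q n (fst x) (snd x)" for n x
  have "\<forall>x\<in>V \<times> {..<N}. bounded (range (\<lambda>n. f n x))"
    using bnd unfolding f_def bounded_real by auto
  then obtain r where r: "strict_mono r" "\<forall>x\<in>V \<times> {..<N}. convergent (\<lambda>n. f (r n) x)"
    using subseq_finite[of "V \<times> {..<N}" f] fin by auto
  define qq where "qq v i = (if i < N then lim (\<lambda>n. q (r n) v i) else 0)" for v i
  have conv: "(\<lambda>n. q (r n) v i) \<longlonglongrightarrow> qq v i" if "v \<in> V" "i < N" for v i
    using r(2) that unfolding f_def qq_def by (auto simp: convergent_LIMSEQ_iff)
  have ilim: "(\<lambda>n. inner_d N (q (r n) u) (q (r n) v)) \<longlonglongrightarrow> inner_d N (qq u) (qq v)"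
    if "u \<in> V" "v \<in> V" for u v
    unfolding inner_d_def by (intro tendsto_sum tendsto_mult conv that) auto
  have tr: "(\<lambda>n. tn (r n)) \<longlonglongrightarrow> chi" using LIMSEQ_subseq_LIMSEQ[OF tlim r(1)] by (simp add: o_def)
  have rhs: "(\<lambda>n. - 1 / (tn (r n) - 1)) \<longlonglongrightarrow> - 1 / (chi - 1)"
    using chi2 by (intro tendsto_intros tr) auto
  have "vector_coloring V E chi N qq"
    unfolding vector_coloring_def
  proof (intro conjI ballI allI impI)
    show "2 \<le> chi" by (rule chi2)
  next
    fix v i assume "N \<le> i" then show "qq v i = 0" by (simp add: qq_def)
  next
    fix v assume v: "v \<in> V"
    have "(\<lambda>n. inner_d N (q (r n) v) (q (r n) v)) = (\<lambda>n. 1)"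
      using tq(3) v unfolding vector_coloring_def by auto
    then show "inner_d N (qq v) (qq v) = 1" using ilim[OF v v] LIMSEQ_unique tendsto_const by metis
  next
    fix u v assume uv: "u \<in> V" "v \<in> V" "E u v"
    have "\<forall>n. inner_d N (q (r n) u) (q (r n) v) \<le> - 1 / (tn (r n) - 1)"
      using tq(3) uv unfolding vector_coloring_def by auto
    then show "inner_d N (qq u) (qq v) \<le> - 1 / (chi - 1)"
      using LIMSEQ_le[OF ilim[OF uv(1,2)] rhs] by auto
  qed
  then show ?thesis unfolding chi_def by blast
qed


theorem lemma2p2:
  fixes VG :: "'a set" and EG :: "'a \<Rightarrow> 'a \<Rightarrow> bool"
    and VH :: "'b set" and EH :: "'b \<Rightarrow> 'b \<Rightarrow> bool" and t :: real
  assumes "graph VG EG" and "graph VH EH"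
    and "chi_v VG EG = t" and "chi_v VH EH = t"
    and inj: "\<And>d p. optimal_vector_coloring VG EG d p \<Longrightarrow> inj_on p VG"
  shows "(\<forall>f. graph_hom VG EG VH EH f \<longrightarrow> inj_on f VG)
    \<and> ((\<forall>d p. optimal_vector_coloring VG EG d p \<longrightarrow>
            (\<forall>g\<in>VG. \<forall>g'\<in>VG. inner_d d (p g) (p g') \<le> - 1 / (t - 1) \<longleftrightarrow> EG g g'))
         \<longrightarrow> (\<forall>f. graph_hom VG EG VH EH f \<longrightarrow> induced_embedding VG EG VH EH f))"
proof -
  obtain d q where q: "vector_coloring VH EH t d q" using attain[OF assms(2)] assms(4) by auto
  have opt: "optimal_vector_coloring VG EG d (\<lambda>v. q (f v))" if f: "graph_hom VG EG VH EH f" for f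
    unfolding optimal_vector_coloring_def assms(3)
    using q f unfolding vector_coloring_def graph_hom_def by auto
  have injf: "inj_on f VG" if f: "graph_hom VG EG VH EH f" for f
  proof -
    have "inj_on (\<lambda>v. q (f v)) VG" by (rule inj[OF opt[OF f]])
    then show ?thesis unfolding inj_on_def by metis
  qed
  show ?thesis
  proof (intro conjI allI impI)
    fix f assume "graph_hom VG EG VH EH f" then show "inj_on f VG" by (rule injf)
  next
    fix f assume H: "\<forall>d p. optimal_vector_coloring VG EG d p \<longrightarrow>
            (\<forall>g\<in>VG. \<forall>g'\<in>VG. inner_d d (p g) (p g') \<le> - 1 / (t - 1) \<longleftrightarrow> EG g g')"
      and f: "graph_hom VG EG VH EH f"
    have iff: "\<forall>g\<in>VG. \<forall>g'\<in>VG. inner_d d (q (f g)) (q (f g')) \<le> - 1 / (t - 1) \<longleftrightarrow> EG g g'"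
      using H opt[OF f] by blast
    have "EG u v \<longleftrightarrow> EH (f u) (f v)" if "u \<in> VG" "v \<in> VG" for u v
    proof
      assume "EG u v" then show "EH (f u) (f v)" using f that unfolding graph_hom_def by blast
    next
      assume "EH (f u) (f v)"
      then have "inner_d d (q (f u)) (q (f v)) \<le> - 1 / (t - 1)"
        using q f that unfolding vector_coloring_def graph_hom_def by blast
      then show "EG u v" using iff that by blast
    qed
    then show "induced_embedding VG EG VH EH f"
      unfolding induced_embedding_def using f injf[OF f] unfolding graph_hom_def by blast
  qed
qed

end
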